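(* Let $(X,\mathcal T,P,\leq,\{\sigma_x:x\in X\})$ be a typed topological space with $X$ finite. For any subset $D\subseteq X$ and any type $p\in P$ there exists a subset $port_p(D)\subseteq D$ such that (1) $D\subseteq p\vdash tr(port_p(D))$, and (2) for every two distinct points $z,w\in port_p(D)$, both $z\notin p\vdash tr(\{w\})$ and $w\notin p\vdash tr(\{z\})$.
   Context: A typed topological space $(X,\mathcal T,P,\leq,\{\sigma_x:x\in X\})$ consists of a topological space $(X,\mathcal T)$, a partially ordered set $(P,\leq)$ of types, and for each $x\in X$ a partial function $\sigma_x:\{O\in\mathcal T:x\in O\}\to P$ such that for all $U,V$ in its domain, $\sigma_x(U)\leq\sigma_x(V)$ iff $U\subseteq V$. $U$ is a type-$p$ neighborhood of $x$ if $U$ is in the domain of $\sigma_x$ and $\sigma_x(U)=p$. $x$ is a $p$-accumulation point of $A$ if every type-$p$ neighborhood of $x$ meets $A$. $p\vdash CL_1(A)=A\cup\{p\text{-accumulation points of }A\}$, $p\vdash CL_n(A)=p\vdash CL_1(p\vdash CL_{n-1}(A))$, $p\vdash tr(A)=\bigcup_{n\ge1}p\vdash CL_n(A)$. *)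

theory Defs
  imports "HOL-Analysis.Analysis"
begin

text \<open>A typed topological space: topology T on X = topspace T, the poset of types is the
  type 'p with its partial order, and sigma x is a partial function (option-valued) from
  the open neighbourhoods of x to types, order-reflecting w.r.t. inclusion.\<close>

definition typed_top_space :: "'a topology \<Rightarrow> ('a \<Rightarrow> 'a set \<Rightarrow> 'p::order option) \<Rightarrow> bool" where
  "typed_top_space T \<sigma> \<longleftrightarrow>
     (\<forall>x \<in> topspace T. \<forall>U p. \<sigma> x U = Some p \<longrightarrow> openin T U \<and> x \<in> U) \<and>
     (\<forall>x \<in> topspace T. \<forall>U V p q. \<sigma> x U = Some p \<longrightarrow> \<sigma> x V = Some q \<longrightarrow> (p \<le> q \<longleftrightarrow> U \<subseteq> V))"

definition p_accumulation_point ::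
  "'a topology \<Rightarrow> ('a \<Rightarrow> 'a set \<Rightarrow> 'p option) \<Rightarrow> 'p \<Rightarrow> 'a set \<Rightarrow> 'a \<Rightarrow> bool" where
  "p_accumulation_point T \<sigma> p A x \<longleftrightarrow>
     x \<in> topspace T \<and> (\<forall>U. \<sigma> x U = Some p \<longrightarrow> U \<inter> A \<noteq> {})"

definition CL1 :: "'a topology \<Rightarrow> ('a \<Rightarrow> 'a set \<Rightarrow> 'p option) \<Rightarrow> 'p \<Rightarrow> 'a set \<Rightarrow> 'a set" where
  "CL1 T \<sigma> p A = A \<union> {x. p_accumulation_point T \<sigma> p A x}"

definition CLn :: "'a topology \<Rightarrow> ('a \<Rightarrow> 'a set \<Rightarrow> 'p option) \<Rightarrow> 'p \<Rightarrow> nat \<Rightarrow> 'a set \<Rightarrow> 'a set" where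
  "CLn T \<sigma> p n A = (CL1 T \<sigma> p ^^ n) A"

definition ptr :: "'a topology \<Rightarrow> ('a \<Rightarrow> 'a set \<Rightarrow> 'p option) \<Rightarrow> 'p \<Rightarrow> 'a set \<Rightarrow> 'a set" where
  "ptr T \<sigma> p A = (\<Union>n \<in> {1..}. CLn T \<sigma> p n A)"

end

theory Submission imports Defs begin
lemma CL1_mono: "A \<subseteq> B \<Longrightarrow> CL1 T \<sigma> p A \<subseteq> CL1 T \<sigma> p B"
  unfolding CL1_def p_accumulation_point_def by blast

lemma CLn_mono: "A \<subseteq> B \<Longrightarrow> CLn T \<sigma> p n A \<subseteq> CLn T \<sigma> p n B"
proof (induction n)
  case 0 then show ?case by (simp add: CLn_def)
next
  case (Suc n) then show ?case unfolding CLn_def by (simp add: CL1_mono)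
qed

lemma ptr_mono: "A \<subseteq> B \<Longrightarrow> ptr T \<sigma> p A \<subseteq> ptr T \<sigma> p B"
  unfolding ptr_def using CLn_mono by (metis SUP_mono order_refl)

lemma ptr_incr: "A \<subseteq> ptr T \<sigma> p A"
proof -
  have "CLn T \<sigma> p 1 A = CL1 T \<sigma> p A" by (simp add: CLn_def)
  moreover have "A \<subseteq> CL1 T \<sigma> p A" by (simp add: CL1_def)
  ultimately show ?thesis unfolding ptr_def by force
qed
lemma CL1_ptr:
  assumes "typed_top_space T \<sigma>"
  shows "CL1 T \<sigma> p (ptr T \<sigma> p A) \<subseteq> ptr T \<sigma> p A"
proof
  fix x assume "x \<in> CL1 T \<sigma> p (ptr T \<sigma> p A)"
  then consider "x \<in> ptr T \<sigma> p A" | "p_accumulation_point T \<sigma> p (ptr T \<sigma> p A) x"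
    unfolding CL1_def by blast
  then show "x \<in> ptr T \<sigma> p A"
  proof cases
    case 2
    then have xT: "x \<in> topspace T" and acc: "\<forall>U. \<sigma> x U = Some p \<longrightarrow> U \<inter> ptr T \<sigma> p A \<noteq> {}"
      unfolding p_accumulation_point_def by auto
    show ?thesis
    proof (cases "\<exists>U. \<sigma> x U = Some p")
      case False
      then have "x \<in> CL1 T \<sigma> p A" unfolding CL1_def p_accumulation_point_def using xT by auto
      moreover have "CLn T \<sigma> p 1 A = CL1 T \<sigma> p A" by (simp add: CLn_def)
      ultimately show ?thesis unfolding ptr_def by force
    next
      case True
      then obtain U where U: "\<sigma> x U = Some p" by blast
      then obtain n where n: "n \<ge> 1" "U \<inter> CLn T \<sigma> p n A \<noteq> {}"
        using acc unfolding ptr_def by blast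
      have uniq: "\<sigma> x V = Some p \<Longrightarrow> V = U" for V
        proof -
        assume V: "\<sigma> x V = Some p"
        have "p \<le> p \<longleftrightarrow> V \<subseteq> U" "p \<le> p \<longleftrightarrow> U \<subseteq> V"
          using assms xT U V unfolding typed_top_space_def by blast+
        then show "V = U" by auto
      qed
      have "p_accumulation_point T \<sigma> p (CLn T \<sigma> p n A) x"
        unfolding p_accumulation_point_def using xT uniq n by auto
      then have "x \<in> CLn T \<sigma> p (Suc n) A" unfolding CLn_def CL1_def by simp
      then show ?thesis unfolding ptr_def by auto
    qed
  qed
qed

lemma ptr_idem:
  assumes "typed_top_space T \<sigma>"
  shows "ptr T \<sigma> p (ptr T \<sigma> p A) \<subseteq> ptr T \<sigma> p A"
proof -
  have "CLn T \<sigma> p n (ptr T \<sigma> p A) \<subseteq> ptr T \<sigma> p A" for n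
  proof (induction n)
    case 0 then show ?case by (simp add: CLn_def)
  next
    case (Suc n)
    have "CLn T \<sigma> p (Suc n) (ptr T \<sigma> p A) = CL1 T \<sigma> p (CLn T \<sigma> p n (ptr T \<sigma> p A))"
      by (simp add: CLn_def)
    also have "\<dots> \<subseteq> CL1 T \<sigma> p (ptr T \<sigma> p A)" using Suc by (rule CL1_mono)
    also have "\<dots> \<subseteq> ptr T \<sigma> p A" using CL1_ptr[OF assms] .
    finally show ?case .
  qed
  then show ?thesis by (simp add: ptr_def[of T \<sigma> p "ptr T \<sigma> p A"] UN_least)
qed

theorem lemma3p5:
  fixes T :: "'a topology" and \<sigma> :: "'a \<Rightarrow> 'a set \<Rightarrow> 'p::order option"
  assumes "typed_top_space T \<sigma>"
    and "finite (topspace T)"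
    and "D \<subseteq> topspace T"
  shows "\<exists>port \<subseteq> D. D \<subseteq> ptr T \<sigma> p port \<and>
           (\<forall>z \<in> port. \<forall>w \<in> port. z \<noteq> w \<longrightarrow>
              z \<notin> ptr T \<sigma> p {w} \<and> w \<notin> ptr T \<sigma> p {z})"
proof -
  have fD: "finite D" using assms(2,3) finite_subset by blast
  let ?Q = "\<lambda>k. \<exists>P'. P' \<subseteq> D \<and> D \<subseteq> ptr T \<sigma> p P' \<and> card P' = k"
  have "?Q (card D)" using ptr_incr[of D T \<sigma> p] by auto
  then obtain k where k: "?Q k" and kmin: "\<And>m. ?Q m \<Longrightarrow> k \<le> m"
    using ex_has_least_nat[of ?Q "card D" id] by auto
  then obtain P where P: "P \<subseteq> D" "D \<subseteq> ptr T \<sigma> p P" "card P = k" by blast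
  have fP: "finite P" using P(1) fD finite_subset by blast
  have key: False if zw: "z \<in> P" "w \<in> P" "z \<noteq> w" "z \<in> ptr T \<sigma> p {w}" for z w
  proof -
    have "ptr T \<sigma> p {w} \<subseteq> ptr T \<sigma> p (P - {z})" using zw by (intro ptr_mono) auto
    then have "P \<subseteq> ptr T \<sigma> p (P - {z})" using zw ptr_incr[of "P - {z}" T \<sigma> p] by blast
    then have "ptr T \<sigma> p P \<subseteq> ptr T \<sigma> p (ptr T \<sigma> p (P - {z}))"
      by (rule ptr_mono)
    then have "ptr T \<sigma> p P \<subseteq> ptr T \<sigma> p (P - {z})"
      using ptr_idem[OF assms(1), of p "P - {z}"] by (rule order_trans)
    then have "D \<subseteq> ptr T \<sigma> p (P - {z})" using P(2) by (rule order_trans[rotated])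
    moreover have "P - {z} \<subseteq> D" using P(1) by blast
    ultimately have "?Q (card (P - {z}))" by blast
    then have "k \<le> card (P - {z})" by (rule kmin)
    moreover have "card (P - {z}) < card P" using fP zw(1) by (rule card_Diff1_less)
    ultimately show False using P(3) by simp
  qed
  have "\<forall>z \<in> P. \<forall>w \<in> P. z \<noteq> w \<longrightarrow>
              z \<notin> ptr T \<sigma> p {w} \<and> w \<notin> ptr T \<sigma> p {z}"
    using key by metis
  then show ?thesis using P(1,2) by auto
qed

end
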